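(* Let $(V,\langle\cdot\,,\cdot\rangle_V)$ be an admissible $\mathrm{Cl}_{r,s}$-module with $s>0$, and let $J_{z_k}$, $k=1,\ldots,r+s$, be the representations of the orthonormal generators $z_1,\ldots,z_{r+s}$ of $\mathrm{Cl}_{r,s}$. Then: (1) the scalar product space $(V,\langle\cdot\,,\cdot\rangle_V)$ is neutral, i.e. the maximal dimensions of subspaces on which the restriction of $\langle\cdot\,,\cdot\rangle_V$ is positive definite, respectively negative definite, coincide; in particular $\dim V$ is even; (2) if $W$ is an admissible sub-module of a $\mathrm{Cl}_{r,s}$-module $(V,\langle\cdot\,,\cdot\rangle_V)$, then its orthogonal complement $W^\perp=\{v\in V:\langle w,v\rangle_V=0\ \forall w\in W\}$ is also an admissible sub-module. Hence an admissible $\mathrm{Cl}_{r,s}$-module $(V,\langle\cdot\,,\cdot\rangle_V)$ decomposes into admissible sub-modules.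
   Context: A scalar product is a real symmetric non-degenerate bilinear form. $\mathbb R^{r,s}$ is $\mathbb R^{r+s}$ with the scalar product whose quadratic form is $x_1^2+\dots+x_r^2-x_{r+1}^2-\dots-x_{r+s}^2$, and $\mathrm{Cl}_{r,s}$ is the Clifford algebra generated by $\mathbb R^{r,s}$ with relation $z^2=-\langle z,z\rangle\cdot1$; orthonormal generators $z_1,\ldots,z_{r+s}$ satisfy $\langle z_i,z_j\rangle=0$ ($i\neq j$), $\langle z_i,z_i\rangle=1$ for $i\le r$, $=-1$ for $i>r$. A $\mathrm{Cl}_{r,s}$-module is a real vector space $V$ with a representation $J\colon\mathrm{Cl}_{r,s}\to\mathrm{End}(V)$, so $J_z^2=-\langle z,z\rangle\mathrm{Id}_V$ for $z\in\mathbb R^{r,s}$. It is admissible if $V$ carries a scalar product $\langle\cdot\,,\cdot\rangle_V$ with $\langle J_zu,v\rangle_V=-\langle u,J_zv\rangle_V$ for all $z\in\mathbb R^{r,s}$, $u,v\in V$. An admissible sub-module of an admissible module $(V,\langle\cdot\,,\cdot\rangle_V)$ is a Clifford sub-module $W$ such that the restriction of $\langle\cdot\,,\cdot\rangle_V$ to $W$ is an admissible scalar product on $W$ (in particular non-degenerate). *)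

theory Defs
  imports "HOL-Analysis.Analysis"
begin

definition scalar_product :: "('v::real_vector \<Rightarrow> 'v \<Rightarrow> real) \<Rightarrow> bool" where
  "scalar_product B \<longleftrightarrow> bilinear B \<and> (\<forall>u v. B u v = B v u)
     \<and> (\<forall>u. (\<forall>v. B u v = 0) \<longrightarrow> u = 0)"

text \<open>Signature of the orthonormal generators z_0, ..., z_(r+s-1) of R^(r,s) (0-based):
  the quadratic form value is 1 for k < r and -1 otherwise.\<close>
definition eta :: "nat \<Rightarrow> nat \<Rightarrow> real" where
  "eta r k = (if k < r then 1 else -1)"

text \<open>A Cl_(r,s)-module structure on V, given by the images J k of the orthonormal generators:
  linear maps satisfying the Clifford relations J_k J_l + J_l J_k = -2 <z_k,z_l> Id.\<close>
definition clifford_module :: "nat \<Rightarrow> nat \<Rightarrow> (nat \<Rightarrow> 'v::real_vector \<Rightarrow> 'v) \<Rightarrow> bool" where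
  "clifford_module r s J \<longleftrightarrow>
     (\<forall>k<r+s. linear (J k)) \<and>
     (\<forall>k<r+s. \<forall>l<r+s. \<forall>v. J k (J l v) + J l (J k v) = (if k = l then - 2 * eta r k else 0) *\<^sub>R v)"

definition admissible_module ::
  "nat \<Rightarrow> nat \<Rightarrow> (nat \<Rightarrow> 'v::real_vector \<Rightarrow> 'v) \<Rightarrow> ('v \<Rightarrow> 'v \<Rightarrow> real) \<Rightarrow> bool" where
  "admissible_module r s J B \<longleftrightarrow> clifford_module r s J \<and> scalar_product B \<and>
     (\<forall>k<r+s. \<forall>u v. B (J k u) v = - B u (J k v))"

definition pos_def_subspace :: "('v::real_vector \<Rightarrow> 'v \<Rightarrow> real) \<Rightarrow> 'v set \<Rightarrow> bool" where
  "pos_def_subspace B U \<longleftrightarrow> subspace U \<and> (\<forall>u\<in>U. u \<noteq> 0 \<longrightarrow> B u u > 0)"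

definition neg_def_subspace :: "('v::real_vector \<Rightarrow> 'v \<Rightarrow> real) \<Rightarrow> 'v set \<Rightarrow> bool" where
  "neg_def_subspace B U \<longleftrightarrow> subspace U \<and> (\<forall>u\<in>U. u \<noteq> 0 \<longrightarrow> B u u < 0)"

definition max_pos_dim :: "('v::euclidean_space \<Rightarrow> 'v \<Rightarrow> real) \<Rightarrow> nat" where
  "max_pos_dim B = Max {dim U | U. pos_def_subspace B U}"

definition max_neg_dim :: "('v::euclidean_space \<Rightarrow> 'v \<Rightarrow> real) \<Rightarrow> nat" where
  "max_neg_dim B = Max {dim U | U. neg_def_subspace B U}"

definition neutral :: "('v::euclidean_space \<Rightarrow> 'v \<Rightarrow> real) \<Rightarrow> bool" where
  "neutral B \<longleftrightarrow> max_pos_dim B = max_neg_dim B"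

definition clifford_submodule :: "nat \<Rightarrow> nat \<Rightarrow> (nat \<Rightarrow> 'v::real_vector \<Rightarrow> 'v) \<Rightarrow> 'v set \<Rightarrow> bool" where
  "clifford_submodule r s J W \<longleftrightarrow> subspace W \<and> (\<forall>k<r+s. \<forall>w\<in>W. J k w \<in> W)"

text \<open>Admissible sub-module: Clifford sub-module on which the restricted form is an admissible
  scalar product. Bilinearity, symmetry and skew-symmetry of the J_k are inherited from V,
  so the only additional content is non-degeneracy of the restriction.\<close>
definition admissible_submodule ::
  "nat \<Rightarrow> nat \<Rightarrow> (nat \<Rightarrow> 'v::real_vector \<Rightarrow> 'v) \<Rightarrow> ('v \<Rightarrow> 'v \<Rightarrow> real) \<Rightarrow> 'v set \<Rightarrow> bool" where
  "admissible_submodule r s J B W \<longleftrightarrow> clifford_submodule r s J W \<and>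
     (\<forall>w\<in>W. (\<forall>u\<in>W. B w u = 0) \<longrightarrow> w = 0)"

definition orth_compl :: "('v \<Rightarrow> 'v \<Rightarrow> real) \<Rightarrow> 'v set \<Rightarrow> 'v set" where
  "orth_compl B W = {v. \<forall>w\<in>W. B w v = 0}"

end

theory Submission imports Defs begin

lemma riesz_rep:
  fixes B :: "'v::euclidean_space \<Rightarrow> 'v \<Rightarrow> real"
  assumes "bilinear B"
  shows "B u v = inner (\<Sum>b\<in>Basis. B u b *\<^sub>R b) v"
proof -
  have l: "linear (\<lambda>y. B u y)" using assms by (simp add: bilinear_def)
  have "B u v = B u (\<Sum>b\<in>Basis. (v \<bullet> b) *\<^sub>R b)" by (simp add: euclidean_representation)
  also have "\<dots> = (\<Sum>b\<in>Basis. (v \<bullet> b) * B u b)"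
    using linear_sum[OF l, of "\<lambda>b. (v \<bullet> b) *\<^sub>R b" Basis] linear_scale[OF l] by simp
  also have "\<dots> = inner (\<Sum>b\<in>Basis. B u b *\<^sub>R b) v"
    unfolding inner_sum_left by (simp add: inner_commute mult.commute)
  finally show ?thesis .
qed

lemma dim_orth_compl:
  fixes B :: "'v::euclidean_space \<Rightarrow> 'v \<Rightarrow> real"
  assumes "scalar_product B" "subspace W"
  shows "dim (orth_compl B W) + dim W = DIM('v)"
proof -
  define A where "A = (\<lambda>u. \<Sum>b\<in>Basis. B u b *\<^sub>R b)"
  have bl: "bilinear B" using assms(1) by (simp add: scalar_product_def)
  have rep: "\<And>u v. B u v = inner (A u) v" unfolding A_def using riesz_rep[OF bl] by blast
  have lin: "linear A"
  proof -
    have l: "linear (\<lambda>x. B x y)" for y using bl by (simp add: bilinear_def)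
    show ?thesis unfolding A_def
      by (rule linearI) (simp_all add: linear_add[OF l] linear_scale[OF l] scaleR_add_left sum.distrib scaleR_right.sum)
  qed
  have inj: "inj A"
  proof (rule injI)
    fix x y assume "A x = A y"
    then have "\<forall>v. B (x - y) v = 0"
      using rep lin by (simp add: linear_diff inner_diff_left)
    then show "x = y" using assms(1) unfolding scalar_product_def by (metis right_minus_eq)
  qed
  have eq: "orth_compl B W = {y \<in> UNIV. \<forall>x \<in> A ` W. orthogonal x y}"
    by (auto simp: orth_compl_def orthogonal_def rep)
  have "dim (A ` W) = dim W"
    using dim_image_eq[OF lin] inj by (meson inj_on_subset subset_UNIV)
  moreover have "subspace (A ` W)" using assms(2) lin by (simp add: linear_subspace_image)
  ultimately show ?thesis
    using dim_subspace_orthogonal_to_vectors[of "A ` W" UNIV] eq by simp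
qed

theorem proposition2p1:
  fixes r s :: nat and J :: "nat \<Rightarrow> 'v::euclidean_space \<Rightarrow> 'v" and B :: "'v \<Rightarrow> 'v \<Rightarrow> real"
  assumes "admissible_module r s J B" and "s > 0"
  shows "neutral B \<and> even DIM('v) \<and>
    (\<forall>W. admissible_submodule r s J B W \<longrightarrow>
       admissible_submodule r s J B (orth_compl B W) \<and>
       W \<inter> orth_compl B W = {0} \<and>
       (\<forall>v. \<exists>w\<in>W. \<exists>u\<in>orth_compl B W. v = w + u))"
proof -
  have cm: "clifford_module r s J" and sp: "scalar_product B"
    and skew: "\<And>k u v. k < r+s \<Longrightarrow> B (J k u) v = - B u (J k v)"
    using assms(1) unfolding admissible_module_def by blast+
  have bl: "bilinear B" and sym: "\<And>u v. B u v = B v u"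
    and nd: "\<And>u. (\<forall>v. B u v = 0) \<Longrightarrow> u = 0"
    using sp by (auto simp: scalar_product_def)
  have lR: "linear (\<lambda>y. B x y)" for x using bl by (simp add: bilinear_def)
  have lL: "linear (\<lambda>y. B y x)" for x using bl by (simp add: bilinear_def)
  have linJ: "\<And>k. k < r+s \<Longrightarrow> linear (J k)" using cm by (simp add: clifford_module_def)
  define j where "j = J r"
  have rk: "r < r + s" using assms(2) by simp
  have jl: "linear j" using linJ[OF rk] j_def by simp
  have jj: "j (j v) = v" for v
  proof -
    have "j (j v) + j (j v) = (- 2 * eta r r) *\<^sub>R v"
    proof -
      have "\<forall>k<r+s. \<forall>l<r+s. \<forall>v. J k (J l v) + J l (J k v) = (if k = l then - 2 * eta r k else 0) *\<^sub>R v"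
        using cm unfolding clifford_module_def by (rule conjunct2)
      then show ?thesis using rk unfolding j_def by simp
    qed
    then have "2 *\<^sub>R j (j v) = 2 *\<^sub>R v" by (simp add: eta_def scaleR_2)
    then show ?thesis by simp
  qed
  have jskew: "B (j u) v = - B u (j v)" for u v using skew[OF rk] j_def by simp
  have jinj: "inj j" by (metis injI jj)
  have Bj: "B (j u) (j u) = - B u u" for u using jskew jj by simp
  have pn: "neg_def_subspace B (j ` U)" if "pos_def_subspace B U" for U
    using that jl Bj unfolding pos_def_subspace_def neg_def_subspace_def
    by (auto simp: linear_subspace_image linear_0)
  have np: "pos_def_subspace B (j ` U)" if "neg_def_subspace B U" for U
    using that jl Bj unfolding pos_def_subspace_def neg_def_subspace_def
    by (auto simp: linear_subspace_image linear_0)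
  have dj: "dim (j ` U) = dim U" for U
    using dim_image_eq[OF jl] jinj by (meson inj_on_subset subset_UNIV)
  have jjU: "j ` j ` U = U" for U by (force simp: image_image jj)
  have "{dim U | U. pos_def_subspace B U} = {dim U | U. neg_def_subspace B U}"
  proof safe
    fix U assume "pos_def_subspace B U"
    then show "\<exists>U'. dim U = dim U' \<and> neg_def_subspace B U'" using pn dj by metis
  next
    fix U assume "neg_def_subspace B U"
    then show "\<exists>U'. dim U = dim U' \<and> pos_def_subspace B U'" using np dj by metis
  qed
  then have neu: "neutral B" by (simp add: neutral_def max_pos_dim_def max_neg_dim_def)
  define Ep where "Ep = {v. j v = v}"
  define Em where "Em = {v. j v = - v}"
  have sEp: "subspace Ep" unfolding Ep_def subspace_def using jl
    by (simp add: linear_0 linear_add linear_scale)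
  have sEm: "subspace Em" unfolding Em_def subspace_def using jl
    by (simp add: linear_0 linear_add linear_scale)
  have isoP: "Ep \<subseteq> orth_compl B Ep"
  proof
    fix u assume u: "u \<in> Ep"
    { fix w assume "w \<in> Ep"
      then have "B w u = - B w u" using u jskew[of w u] by (simp add: Ep_def)
      then have "B w u = 0" by simp }
    then show "u \<in> orth_compl B Ep" by (simp add: orth_compl_def)
  qed
  have isoM: "Em \<subseteq> orth_compl B Em"
  proof
    fix u assume u: "u \<in> Em"
    { fix w assume w: "w \<in> Em"
      have "B (j w) u = - B w u" using w linear_neg[OF lL] by (simp add: Em_def)
      moreover have "B w (j u) = - B w u" using u linear_neg[OF lR] by (simp add: Em_def)
      ultimately have "B w u = 0" using jskew[of w u] by simp }
    then show "u \<in> orth_compl B Em" by (simp add: orth_compl_def)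
  qed
  have "dim Ep \<le> dim (orth_compl B Ep)" using isoP dim_subset by blast
  then have d1: "2 * dim Ep \<le> DIM('v)" using dim_orth_compl[OF sp sEp] by simp
  have "dim Em \<le> dim (orth_compl B Em)" using isoM dim_subset by blast
  then have d2: "2 * dim Em \<le> DIM('v)" using dim_orth_compl[OF sp sEm] by simp
  have sumU: "{x + y |x y. x \<in> Ep \<and> y \<in> Em} = UNIV"
  proof safe
    fix v :: 'v
    have "j ((1/2) *\<^sub>R (v + j v)) = (1/2) *\<^sub>R (v + j v)"
      using jl jj by (simp add: linear_scale linear_add add.commute)
    moreover have "j ((1/2) *\<^sub>R (v - j v)) = - ((1/2) *\<^sub>R (v - j v))"
      using jl jj by (simp add: linear_scale linear_diff)
    moreover have "v = (1/2) *\<^sub>R (v + j v) + (1/2) *\<^sub>R (v - j v)"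
      by (simp add: algebra_simps scaleR_2[symmetric])
    ultimately show "\<exists>x y. v = x + y \<and> x \<in> Ep \<and> y \<in> Em"
      unfolding Ep_def Em_def by blast
  qed simp
  have "Ep \<inter> Em \<subseteq> {0}"
  proof
    fix v assume "v \<in> Ep \<inter> Em"
    then have "v = - v" unfolding Ep_def Em_def by (metis (mono_tags) IntE mem_Collect_eq)
    then have "2 *\<^sub>R v = 0" by (simp add: eq_neg_iff_add_eq_0 scaleR_2)
    then show "v \<in> {0}" by simp
  qed
  then have d0: "dim (Ep \<inter> Em) = 0" by simp
  have "dim (UNIV::'v set) + dim (Ep \<inter> Em) = dim Ep + dim Em"
    using dim_sums_Int[OF sEp sEm] unfolding sumU .
  then have "dim Ep + dim Em = DIM('v)" unfolding d0 by simp
  then have "DIM('v) = 2 * dim Ep" using d1 d2 by linarith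
  then have ev: "even DIM('v)" by simp
  have part3: "admissible_submodule r s J B (orth_compl B W) \<and>
       W \<inter> orth_compl B W = {0} \<and>
       (\<forall>v. \<exists>w\<in>W. \<exists>u\<in>orth_compl B W. v = w + u)"
    if aW: "admissible_submodule r s J B W" for W
  proof -
    let ?O = "orth_compl B W"
    have sW: "subspace W" and JW: "\<And>k w. k < r+s \<Longrightarrow> w \<in> W \<Longrightarrow> J k w \<in> W"
      and ndW: "\<And>w. w \<in> W \<Longrightarrow> (\<forall>u\<in>W. B w u = 0) \<Longrightarrow> w = 0"
      using aW by (auto simp: admissible_submodule_def clifford_submodule_def)
    have sO: "subspace ?O" unfolding subspace_def orth_compl_def
      by (simp add: linear_0[OF lR] linear_add[OF lR] linear_scale[OF lR])
    have JO: "J k v \<in> ?O" if "k < r+s" "v \<in> ?O" for k v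
    proof -
      { fix w assume "w \<in> W"
        then have "B (J k w) v = 0" using that JW by (simp add: orth_compl_def)
        then have "B w (J k v) = 0" using skew[OF that(1)] by simp }
      then show ?thesis by (simp add: orth_compl_def)
    qed
    have int: "W \<inter> ?O = {0}"
    proof
      show "W \<inter> ?O \<subseteq> {0}"
      proof
        fix v assume v: "v \<in> W \<inter> ?O"
        then have "\<forall>u\<in>W. B v u = 0" using sym by (auto simp: orth_compl_def)
        then show "v \<in> {0}" using ndW v by simp
      qed
      show "{0} \<subseteq> W \<inter> ?O" using sW sO by (simp add: subspace_0)
    qed
    have di: "dim (W \<inter> ?O) = 0" using int by simp
    have "dim {x + y |x y. x \<in> W \<and> y \<in> ?O} + dim (W \<inter> ?O) = dim W + dim ?O"
      using dim_sums_Int[OF sW sO] .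
    then have "dim {x + y |x y. x \<in> W \<and> y \<in> ?O} = DIM('v)"
      using dim_orth_compl[OF sp sW] unfolding di by linarith
    then have sp1: "span {x + y |x y. x \<in> W \<and> y \<in> ?O} = UNIV"
      by (rule dim_eq_full[THEN iffD1])
    moreover have "subspace {x + y |x y. x \<in> W \<and> y \<in> ?O}"
      using subspace_sums[OF sW sO] by (simp add: set_plus_def)
    then have "span {x + y |x y. x \<in> W \<and> y \<in> ?O} = {x + y |x y. x \<in> W \<and> y \<in> ?O}"
      by (rule span_eq_iff[THEN iffD2])
    ultimately have full: "{x + y |x y. x \<in> W \<and> y \<in> ?O} = UNIV"
      by simp
    have dec: "\<forall>v. \<exists>w\<in>W. \<exists>u\<in>?O. v = w + u"
    proof
      fix v :: 'v
      have "v \<in> {x + y |x y. x \<in> W \<and> y \<in> ?O}" unfolding full by simp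
      then show "\<exists>w\<in>W. \<exists>u\<in>?O. v = w + u" by blast
    qed
    have ndO: "v = 0" if v: "v \<in> ?O" "\<forall>u\<in>?O. B v u = 0" for v
    proof -
      have "B v x = 0" for x
      proof -
        obtain w u where "w \<in> W" "u \<in> ?O" "x = w + u" using dec by blast
        moreover have "B v w = 0" using v(1) \<open>w \<in> W\<close> sym by (auto simp: orth_compl_def)
        ultimately show ?thesis using v(2) by (simp add: linear_add[OF lR])
      qed
      then show ?thesis using nd by blast
    qed
    have "admissible_submodule r s J B ?O"
      unfolding admissible_submodule_def clifford_submodule_def using sO JO ndO by blast
    then show ?thesis using int dec by blast
  qed
  show ?thesis using neu ev part3 by blast
qed

end
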